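(* Let $G$ be a graph, let $R\subseteq V(G)$ be the vertex set of an induced copy of $P_3$ in $G$, and let $C\subseteq V(G)\setminus R$ be a clique in $G$ with $m\ge 2$ vertices, each of odd degree in $G$. Assume every vertex of $R$ is adjacent to every vertex of $C$. Then one can admissibly remove from $G$ a subset of $C\cup R$ such that the remaining vertices of $C\cup R$ form a clique with at most $m-1$ vertices, each of odd degree in the remaining graph.
   Context: $P_3$ denotes the path with three edges (four vertices). Removing a set $T$ of vertices from a graph $G$ is a simple admissible removal if $T$ is an independent set in $G$ and the number of edges between $T$ and $V(G)\setminus T$ is even. Removing a set of vertices is admissible if it can be realised by a sequence of simple admissible removals, each performed in the graph remaining after the previous ones. Degrees are always taken in the current remaining graph. *)

theory Defs
  imports Main
begin

text \<open>A (finite simple) graph is a finite vertex set V together with a symmetric,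
irreflexive adjacency relation E; only edges with both ends in V count.
Removing vertices gives the induced subgraph on the remaining vertex set.\<close>

definition graph :: "'a set \<Rightarrow> ('a \<Rightarrow> 'a \<Rightarrow> bool) \<Rightarrow> bool" where
  "graph V E \<longleftrightarrow> finite V \<and> (\<forall>x y. E x y \<longrightarrow> E y x) \<and> (\<forall>x. \<not> E x x)"

definition degree :: "'a set \<Rightarrow> ('a \<Rightarrow> 'a \<Rightarrow> bool) \<Rightarrow> 'a \<Rightarrow> nat" where
  "degree V E v = card {u \<in> V. E v u}"

definition independent :: "('a \<Rightarrow> 'a \<Rightarrow> bool) \<Rightarrow> 'a set \<Rightarrow> bool" where
  "independent E T \<longleftrightarrow> (\<forall>x\<in>T. \<forall>y\<in>T. \<not> E x y)"

definition clique :: "('a \<Rightarrow> 'a \<Rightarrow> bool) \<Rightarrow> 'a set \<Rightarrow> bool" where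
  "clique E K \<longleftrightarrow> (\<forall>x\<in>K. \<forall>y\<in>K. x \<noteq> y \<longrightarrow> E x y)"

definition cut_size :: "'a set \<Rightarrow> ('a \<Rightarrow> 'a \<Rightarrow> bool) \<Rightarrow> 'a set \<Rightarrow> nat" where
  "cut_size V E T = card {(x, y). x \<in> T \<and> y \<in> V - T \<and> E x y}"

definition simple_admissible :: "'a set \<Rightarrow> ('a \<Rightarrow> 'a \<Rightarrow> bool) \<Rightarrow> 'a set \<Rightarrow> bool" where
  "simple_admissible V E T \<longleftrightarrow> T \<subseteq> V \<and> independent E T \<and> even (cut_size V E T)"

inductive admissible :: "'a set \<Rightarrow> ('a \<Rightarrow> 'a \<Rightarrow> bool) \<Rightarrow> 'a set \<Rightarrow> bool" where
  adm_empty: "admissible V E {}"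
| adm_step: "simple_admissible V E T \<Longrightarrow> admissible (V - T) E S \<Longrightarrow> admissible V E (T \<union> S)"

definition induced_P3 :: "'a set \<Rightarrow> ('a \<Rightarrow> 'a \<Rightarrow> bool) \<Rightarrow> 'a set \<Rightarrow> bool" where
  "induced_P3 V E R \<longleftrightarrow> (\<exists>a b c d. R = {a, b, c, d} \<and> R \<subseteq> V \<and> distinct [a, b, c, d]
      \<and> E a b \<and> E b c \<and> E c d \<and> \<not> E a c \<and> \<not> E a d \<and> \<not> E b d)"

end

theory Submission
  imports Defs
begin

lemma cnt_card: "finite S \<Longrightarrow> card {u\<in>S. P u} = (\<Sum>u\<in>S. if P u then 1 else 0::nat)"
  unfolding card_eq_sum by (rule sum.inter_filter)

lemma cut_sum:
  assumes "graph V E" "T \<subseteq> V" "independent E T"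
  shows "cut_size V E T = (\<Sum>x\<in>T. degree V E x)"
proof -
  have fin: "finite V" using assms(1) by (simp add: graph_def)
  have "{(x, y). x \<in> T \<and> y \<in> V - T \<and> E x y} = Sigma T (\<lambda>x. {u\<in>V. E x u})"
    using assms(3) unfolding independent_def by auto
  moreover have "card (Sigma T (\<lambda>x. {u\<in>V. E x u})) = (\<Sum>x\<in>T. card {u\<in>V. E x u})"
    by (rule card_SigmaI) (use fin assms(2) finite_subset in auto)
  ultimately show ?thesis unfolding cut_size_def degree_def by simp
qed

lemma deg_remove:
  assumes "graph V E" "S \<subseteq> V"
  shows "degree (V - S) E v + (\<Sum>u\<in>S. if E v u then 1 else 0) = degree V E v"
proof -
  have fin: "finite V" using assms(1) by (simp add: graph_def)
  have fS: "finite S" using fin assms(2) finite_subset by auto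
  have "{u\<in>V. E v u} = {u\<in>V - S. E v u} \<union> {u\<in>S. E v u}" using assms(2) by auto
  moreover have "card ({u\<in>V - S. E v u} \<union> {u\<in>S. E v u}) = card {u\<in>V - S. E v u} + card {u\<in>S. E v u}"
    by (rule card_Un_disjoint) (use fin fS in auto)
  ultimately show ?thesis unfolding degree_def using cnt_card[OF fS] by simp
qed

lemma par:
  assumes "graph V E" "S \<subseteq> V"
  shows "odd (degree (V - S) E v) \<longleftrightarrow> odd (degree V E v + (\<Sum>u\<in>S. if E v u then 1 else 0))"
  using deg_remove[OF assms, of v] by (metis even_add)

lemma sa_intro:
  assumes "graph V E" "S \<subseteq> V" "T \<subseteq> V - S" "independent E T"
    "even (\<Sum>x\<in>T. degree V E x + (\<Sum>u\<in>S. if E x u then 1 else 0))"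
  shows "simple_admissible (V - S) E T"
proof -
  have g: "graph (V - S) E" using assms(1) by (auto simp: graph_def)
  have fT: "finite T" using assms(1,3) finite_subset by (auto simp: graph_def)
  have "(\<Sum>x\<in>T. degree V E x + (\<Sum>u\<in>S. if E x u then 1 else 0)) =
        (\<Sum>x\<in>T. degree (V - S) E x) + 2 * (\<Sum>x\<in>T. (\<Sum>u\<in>S. if E x u then 1 else 0))"
    using deg_remove[OF assms(1,2)] by (simp add: sum.distrib sum_distrib_left mult_2 add.assoc flip: deg_remove[OF assms(1,2)])
  then have "even (\<Sum>x\<in>T. degree (V - S) E x)" using assms(5) by simp
  then show ?thesis unfolding simple_admissible_def using cut_sum[OF g assms(3,4)] assms(3,4) by simp
qed

lemma step: "admissible V E S \<Longrightarrow> simple_admissible (V - S) E T \<Longrightarrow> admissible V E (S \<union> T)"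
proof (induction rule: admissible.induct)
  case (adm_empty V E)
  then show ?case using admissible.adm_step[of V E T "{}"] admissible.adm_empty by (simp add: admissible.adm_empty)
next
  case (adm_step V E T' S)
  have e: "V - T' - S = V - (T' \<union> S)" by auto
  have "admissible (V - T') E (S \<union> T)" using adm_step by (simp only: e)
  then show ?case using admissible.adm_step[OF adm_step(1)] by (simp add: Un_assoc)
qed

context
  fixes V :: "'a set" and E a b c d x0 x1
  assumes G: "graph V E"
    and inV: "a \<in> V" "b \<in> V" "c \<in> V" "d \<in> V" "x0 \<in> V" "x1 \<in> V"
    and dist: "distinct [a,b,c,d,x0,x1]"
    and adj: "E a b" "E b c" "E c d" "\<not> E a c" "\<not> E a d" "\<not> E b d"
      "E a x0" "E b x0" "E c x0" "E d x0" "E a x1" "E b x1" "E c x1" "E d x1" "E x0 x1"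
    and oddx: "odd (degree V E x0)" "odd (degree V E x1)"
begin

lemma sym: "E x y \<Longrightarrow> E y x" using G by (auto simp: graph_def)
lemma irr: "\<not> E x x" using G by (auto simp: graph_def)

lemmas F = inV adj adj(1-3,7-15)[THEN sym] irr
lemma nadj: "\<not> E c a" "\<not> E d a" "\<not> E d b" using adj(4-6) sym by blast+
lemma D: "a \<noteq> b" "a \<noteq> c" "a \<noteq> d" "a \<noteq> x0" "a \<noteq> x1" "b \<noteq> c" "b \<noteq> d" "b \<noteq> x0" "b \<noteq> x1"
  "c \<noteq> d" "c \<noteq> x0" "c \<noteq> x1" "d \<noteq> x0" "d \<noteq> x1" "x0 \<noteq> x1" using dist by auto
lemmas FF = F nadj D D[symmetric] oddx

lemma e0000: "even (degree V E a) \<Longrightarrow> even (degree V E b) \<Longrightarrow> even (degree V E c) \<Longrightarrow> even (degree V E d) \<Longrightarrow> admissible V E {a,b,c,d,x0,x1}"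
proof -
  assume h: "even (degree V E a)" "even (degree V E b)" "even (degree V E c)" "even (degree V E d)"
  have "admissible V E ((((({} \<union> {b}) \<union> {x0}) \<union> {c}) \<union> {x1}) \<union> {a,d})"
    by (intro step adm_empty; rule sa_intro[OF G]; simp add: FF sum.insert_if independent_def h)
  then show ?thesis by (simp add: insert_commute)
qed

lemma e0011: "even (degree V E a) \<Longrightarrow> even (degree V E b) \<Longrightarrow> odd (degree V E c) \<Longrightarrow> odd (degree V E d) \<Longrightarrow> admissible V E {a,b,c,d,x0,x1}"
proof -
  assume h: "even (degree V E a)" "even (degree V E b)" "odd (degree V E c)" "odd (degree V E d)"
  have "admissible V E ((((({} \<union> {a}) \<union> {x0}) \<union> {c}) \<union> {x1}) \<union> {b,d})"
    by (intro step adm_empty; rule sa_intro[OF G]; simp add: FF sum.insert_if independent_def h)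
  then show ?thesis by (simp add: insert_commute)
qed

lemma e0101: "even (degree V E a) \<Longrightarrow> odd (degree V E b) \<Longrightarrow> even (degree V E c) \<Longrightarrow> odd (degree V E d) \<Longrightarrow> admissible V E {a,b,c,d,x0,x1}"
proof -
  assume h: "even (degree V E a)" "odd (degree V E b)" "even (degree V E c)" "odd (degree V E d)"
  have "admissible V E ((((({} \<union> {c}) \<union> {x0}) \<union> {a,d}) \<union> {b}) \<union> {x1})"
    by (intro step adm_empty; rule sa_intro[OF G]; simp add: FF sum.insert_if independent_def h)
  then show ?thesis by (simp add: insert_commute)
qed

lemma e0110: "even (degree V E a) \<Longrightarrow> odd (degree V E b) \<Longrightarrow> odd (degree V E c) \<Longrightarrow> even (degree V E d) \<Longrightarrow> admissible V E {a,b,c,d,x0,x1}"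
proof -
  assume h: "even (degree V E a)" "odd (degree V E b)" "odd (degree V E c)" "even (degree V E d)"
  have "admissible V E ((((({} \<union> {a}) \<union> {x0}) \<union> {c}) \<union> {x1}) \<union> {b,d})"
    by (intro step adm_empty; rule sa_intro[OF G]; simp add: FF sum.insert_if independent_def h)
  then show ?thesis by (simp add: insert_commute)
qed

lemma e1001: "odd (degree V E a) \<Longrightarrow> even (degree V E b) \<Longrightarrow> even (degree V E c) \<Longrightarrow> odd (degree V E d) \<Longrightarrow> admissible V E {a,b,c,d,x0,x1}"
proof -
  assume h: "odd (degree V E a)" "even (degree V E b)" "even (degree V E c)" "odd (degree V E d)"
  have "admissible V E ((((({} \<union> {b}) \<union> {x0}) \<union> {c}) \<union> {x1}) \<union> {a,d})"
    by (intro step adm_empty; rule sa_intro[OF G]; simp add: FF sum.insert_if independent_def h)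
  then show ?thesis by (simp add: insert_commute)
qed

lemma e1010: "odd (degree V E a) \<Longrightarrow> even (degree V E b) \<Longrightarrow> odd (degree V E c) \<Longrightarrow> even (degree V E d) \<Longrightarrow> admissible V E {a,b,c,d,x0,x1}"
proof -
  assume h: "odd (degree V E a)" "even (degree V E b)" "odd (degree V E c)" "even (degree V E d)"
  have "admissible V E ((((({} \<union> {b}) \<union> {x0}) \<union> {a,c}) \<union> {d}) \<union> {x1})"
    by (intro step adm_empty; rule sa_intro[OF G]; simp add: FF sum.insert_if independent_def h)
  then show ?thesis by (simp add: insert_commute)
qed

lemma e1100: "odd (degree V E a) \<Longrightarrow> odd (degree V E b) \<Longrightarrow> even (degree V E c) \<Longrightarrow> even (degree V E d) \<Longrightarrow> admissible V E {a,b,c,d,x0,x1}"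
proof -
  assume h: "odd (degree V E a)" "odd (degree V E b)" "even (degree V E c)" "even (degree V E d)"
  have "admissible V E ((((({} \<union> {c}) \<union> {x0}) \<union> {a}) \<union> {x1}) \<union> {b,d})"
    by (intro step adm_empty; rule sa_intro[OF G]; simp add: FF sum.insert_if independent_def h)
  then show ?thesis by (simp add: insert_commute)
qed

lemma e1111: "odd (degree V E a) \<Longrightarrow> odd (degree V E b) \<Longrightarrow> odd (degree V E c) \<Longrightarrow> odd (degree V E d) \<Longrightarrow> admissible V E {a,b,c,d,x0,x1}"
proof -
  assume h: "odd (degree V E a)" "odd (degree V E b)" "odd (degree V E c)" "odd (degree V E d)"
  have "admissible V E ((((({} \<union> {a,c}) \<union> {d}) \<union> {x0}) \<union> {b}) \<union> {x1})"
    by (intro step adm_empty; rule sa_intro[OF G]; simp add: FF sum.insert_if independent_def h)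
  then show ?thesis by (simp add: insert_commute)
qed

lemma o0001: "even (degree V E a) \<Longrightarrow> even (degree V E b) \<Longrightarrow> even (degree V E c) \<Longrightarrow> odd (degree V E d) \<Longrightarrow> \<exists>r1 r2 r3 r4. {r1,r2,r3,r4} = {a,b,c,d} \<and> distinct [r1,r2,r3,r4] \<and> admissible V E {r1,x0,r2,x1,r3} \<and> odd (degree (V - {r1,x0,r2,x1,r3}) E r4)"
proof -
  assume h: "even (degree V E a)" "even (degree V E b)" "even (degree V E c)" "odd (degree V E d)"
  have "admissible V E ((((({} \<union> {b}) \<union> {x0}) \<union> {c}) \<union> {x1}) \<union> {d})"
    by (intro step adm_empty; rule sa_intro[OF G]; simp add: FF sum.insert_if independent_def h)
  then have "admissible V E {b,x0,c,x1,d}" by (simp add: insert_commute)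
  moreover have "odd (degree (V - {b,x0,c,x1,d}) E a)" by (simp add: par[OF G] FF sum.insert_if h)
  moreover have "{b,c,d,a} = {a,b,c,d}" by auto
  moreover have "distinct [b,c,d,a]" using dist by auto
  ultimately show ?thesis by blast
qed

lemma o0010: "even (degree V E a) \<Longrightarrow> even (degree V E b) \<Longrightarrow> odd (degree V E c) \<Longrightarrow> even (degree V E d) \<Longrightarrow> \<exists>r1 r2 r3 r4. {r1,r2,r3,r4} = {a,b,c,d} \<and> distinct [r1,r2,r3,r4] \<and> admissible V E {r1,x0,r2,x1,r3} \<and> odd (degree (V - {r1,x0,r2,x1,r3}) E r4)"
proof -
  assume h: "even (degree V E a)" "even (degree V E b)" "odd (degree V E c)" "even (degree V E d)"
  have "admissible V E ((((({} \<union> {a}) \<union> {x0}) \<union> {b}) \<union> {x1}) \<union> {c})"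
    by (intro step adm_empty; rule sa_intro[OF G]; simp add: FF sum.insert_if independent_def h)
  then have "admissible V E {a,x0,b,x1,c}" by (simp add: insert_commute)
  moreover have "odd (degree (V - {a,x0,b,x1,c}) E d)" by (simp add: par[OF G] FF sum.insert_if h)
  moreover have "{a,b,c,d} = {a,b,c,d}" by auto
  moreover have "distinct [a,b,c,d]" using dist by auto
  ultimately show ?thesis by blast
qed

lemma o0100: "even (degree V E a) \<Longrightarrow> odd (degree V E b) \<Longrightarrow> even (degree V E c) \<Longrightarrow> even (degree V E d) \<Longrightarrow> \<exists>r1 r2 r3 r4. {r1,r2,r3,r4} = {a,b,c,d} \<and> distinct [r1,r2,r3,r4] \<and> admissible V E {r1,x0,r2,x1,r3} \<and> odd (degree (V - {r1,x0,r2,x1,r3}) E r4)"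
proof -
  assume h: "even (degree V E a)" "odd (degree V E b)" "even (degree V E c)" "even (degree V E d)"
  have "admissible V E ((((({} \<union> {c}) \<union> {x0}) \<union> {d}) \<union> {x1}) \<union> {a})"
    by (intro step adm_empty; rule sa_intro[OF G]; simp add: FF sum.insert_if independent_def h)
  then have "admissible V E {c,x0,d,x1,a}" by (simp add: insert_commute)
  moreover have "odd (degree (V - {c,x0,d,x1,a}) E b)" by (simp add: par[OF G] FF sum.insert_if h)
  moreover have "{c,d,a,b} = {a,b,c,d}" by auto
  moreover have "distinct [c,d,a,b]" using dist by auto
  ultimately show ?thesis by blast
qed

lemma o0111: "even (degree V E a) \<Longrightarrow> odd (degree V E b) \<Longrightarrow> odd (degree V E c) \<Longrightarrow> odd (degree V E d) \<Longrightarrow> \<exists>r1 r2 r3 r4. {r1,r2,r3,r4} = {a,b,c,d} \<and> distinct [r1,r2,r3,r4] \<and> admissible V E {r1,x0,r2,x1,r3} \<and> odd (degree (V - {r1,x0,r2,x1,r3}) E r4)"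
proof -
  assume h: "even (degree V E a)" "odd (degree V E b)" "odd (degree V E c)" "odd (degree V E d)"
  have "admissible V E ((((({} \<union> {a}) \<union> {x0}) \<union> {c}) \<union> {x1}) \<union> {d})"
    by (intro step adm_empty; rule sa_intro[OF G]; simp add: FF sum.insert_if independent_def h)
  then have "admissible V E {a,x0,c,x1,d}" by (simp add: insert_commute)
  moreover have "odd (degree (V - {a,x0,c,x1,d}) E b)" by (simp add: par[OF G] FF sum.insert_if h)
  moreover have "{a,c,d,b} = {a,b,c,d}" by auto
  moreover have "distinct [a,c,d,b]" using dist by auto
  ultimately show ?thesis by blast
qed

lemma o1000: "odd (degree V E a) \<Longrightarrow> even (degree V E b) \<Longrightarrow> even (degree V E c) \<Longrightarrow> even (degree V E d) \<Longrightarrow> \<exists>r1 r2 r3 r4. {r1,r2,r3,r4} = {a,b,c,d} \<and> distinct [r1,r2,r3,r4] \<and> admissible V E {r1,x0,r2,x1,r3} \<and> odd (degree (V - {r1,x0,r2,x1,r3}) E r4)"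
proof -
  assume h: "odd (degree V E a)" "even (degree V E b)" "even (degree V E c)" "even (degree V E d)"
  have "admissible V E ((((({} \<union> {b}) \<union> {x0}) \<union> {c}) \<union> {x1}) \<union> {a})"
    by (intro step adm_empty; rule sa_intro[OF G]; simp add: FF sum.insert_if independent_def h)
  then have "admissible V E {b,x0,c,x1,a}" by (simp add: insert_commute)
  moreover have "odd (degree (V - {b,x0,c,x1,a}) E d)" by (simp add: par[OF G] FF sum.insert_if h)
  moreover have "{b,c,a,d} = {a,b,c,d}" by auto
  moreover have "distinct [b,c,a,d]" using dist by auto
  ultimately show ?thesis by blast
qed

lemma o1011: "odd (degree V E a) \<Longrightarrow> even (degree V E b) \<Longrightarrow> odd (degree V E c) \<Longrightarrow> odd (degree V E d) \<Longrightarrow> \<exists>r1 r2 r3 r4. {r1,r2,r3,r4} = {a,b,c,d} \<and> distinct [r1,r2,r3,r4] \<and> admissible V E {r1,x0,r2,x1,r3} \<and> odd (degree (V - {r1,x0,r2,x1,r3}) E r4)"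
proof -
  assume h: "odd (degree V E a)" "even (degree V E b)" "odd (degree V E c)" "odd (degree V E d)"
  have "admissible V E ((((({} \<union> {b}) \<union> {x0}) \<union> {d}) \<union> {x1}) \<union> {a})"
    by (intro step adm_empty; rule sa_intro[OF G]; simp add: FF sum.insert_if independent_def h)
  then have "admissible V E {b,x0,d,x1,a}" by (simp add: insert_commute)
  moreover have "odd (degree (V - {b,x0,d,x1,a}) E c)" by (simp add: par[OF G] FF sum.insert_if h)
  moreover have "{b,d,a,c} = {a,b,c,d}" by auto
  moreover have "distinct [b,d,a,c]" using dist by auto
  ultimately show ?thesis by blast
qed

lemma o1101: "odd (degree V E a) \<Longrightarrow> odd (degree V E b) \<Longrightarrow> even (degree V E c) \<Longrightarrow> odd (degree V E d) \<Longrightarrow> \<exists>r1 r2 r3 r4. {r1,r2,r3,r4} = {a,b,c,d} \<and> distinct [r1,r2,r3,r4] \<and> admissible V E {r1,x0,r2,x1,r3} \<and> odd (degree (V - {r1,x0,r2,x1,r3}) E r4)"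
proof -
  assume h: "odd (degree V E a)" "odd (degree V E b)" "even (degree V E c)" "odd (degree V E d)"
  have "admissible V E ((((({} \<union> {c}) \<union> {x0}) \<union> {a}) \<union> {x1}) \<union> {d})"
    by (intro step adm_empty; rule sa_intro[OF G]; simp add: FF sum.insert_if independent_def h)
  then have "admissible V E {c,x0,a,x1,d}" by (simp add: insert_commute)
  moreover have "odd (degree (V - {c,x0,a,x1,d}) E b)" by (simp add: par[OF G] FF sum.insert_if h)
  moreover have "{c,a,d,b} = {a,b,c,d}" by auto
  moreover have "distinct [c,a,d,b]" using dist by auto
  ultimately show ?thesis by blast
qed

lemma o1110: "odd (degree V E a) \<Longrightarrow> odd (degree V E b) \<Longrightarrow> odd (degree V E c) \<Longrightarrow> even (degree V E d) \<Longrightarrow> \<exists>r1 r2 r3 r4. {r1,r2,r3,r4} = {a,b,c,d} \<and> distinct [r1,r2,r3,r4] \<and> admissible V E {r1,x0,r2,x1,r3} \<and> odd (degree (V - {r1,x0,r2,x1,r3}) E r4)"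
proof -
  assume h: "odd (degree V E a)" "odd (degree V E b)" "odd (degree V E c)" "even (degree V E d)"
  have "admissible V E ((((({} \<union> {d}) \<union> {x0}) \<union> {a}) \<union> {x1}) \<union> {b})"
    by (intro step adm_empty; rule sa_intro[OF G]; simp add: FF sum.insert_if independent_def h)
  then have "admissible V E {d,x0,a,x1,b}" by (simp add: insert_commute)
  moreover have "odd (degree (V - {d,x0,a,x1,b}) E c)" by (simp add: par[OF G] FF sum.insert_if h)
  moreover have "{d,a,b,c} = {a,b,c,d}" by auto
  moreover have "distinct [d,a,b,c]" using dist by auto
  ultimately show ?thesis by blast
qed

lemma Even: "even (degree V E a + degree V E b + degree V E c + degree V E d) \<Longrightarrow> admissible V E {a,b,c,d,x0,x1}"
  by (cases "even (degree V E a)"; cases "even (degree V E b)"; cases "even (degree V E c)"; cases "even (degree V E d)"; ((simp; fail) | (rule e0000; assumption) | (rule e0011; assumption) | (rule e0101; assumption) | (rule e0110; assumption) | (rule e1001; assumption) | (rule e1010; assumption) | (rule e1100; assumption) | (rule e1111; assumption)))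

lemma Odd: "odd (degree V E a + degree V E b + degree V E c + degree V E d) \<Longrightarrow> \<exists>r1 r2 r3 r4. {r1,r2,r3,r4} = {a,b,c,d} \<and> distinct [r1,r2,r3,r4] \<and> admissible V E {r1,x0,r2,x1,r3} \<and> odd (degree (V - {r1,x0,r2,x1,r3}) E r4)"
  by (cases "even (degree V E a)"; cases "even (degree V E b)"; cases "even (degree V E c)"; cases "even (degree V E d)"; ((simp; fail) | (rule o0001; assumption) | (rule o0010; assumption) | (rule o0100; assumption) | (rule o0111; assumption) | (rule o1000; assumption) | (rule o1011; assumption) | (rule o1101; assumption) | (rule o1110; assumption)))

end

lemma allcnt: "finite S \<Longrightarrow> \<forall>u\<in>S. E v u \<Longrightarrow> (\<Sum>u\<in>S. if E v u then 1 else 0) = card S"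
  by simp

theorem mainTheorem10:
  fixes V :: "'a set" and E :: "'a \<Rightarrow> 'a \<Rightarrow> bool" and R C :: "'a set" and m :: nat
  assumes "graph V E"
    and "induced_P3 V E R"
    and "C \<subseteq> V - R" and "clique E C" and "card C = m" and "m \<ge> 2"
    and "\<forall>v\<in>C. odd (degree V E v)"
    and "\<forall>r\<in>R. \<forall>c\<in>C. E r c"
  shows "\<exists>S. S \<subseteq> C \<union> R \<and> admissible V E S \<and>
           clique E ((C \<union> R) - S) \<and> card ((C \<union> R) - S) \<le> m - 1 \<and>
           (\<forall>v\<in>(C \<union> R) - S. odd (degree (V - S) E v))"
proof -
  note G = assms(1)
  have symE: "\<And>x y. E x y \<Longrightarrow> E y x" and irrE: "\<And>x. \<not> E x x" using G by (auto simp: graph_def)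
  have finV: "finite V" using G by (simp add: graph_def)
  have finC: "finite C" using assms(3) finV finite_subset by blast
  obtain a b c d where R: "R = {a,b,c,d}" "R \<subseteq> V" "distinct [a,b,c,d]"
    and ad: "E a b" "E b c" "E c d" "\<not> E a c" "\<not> E a d" "\<not> E b d"
    using assms(2) unfolding induced_P3_def by blast
  have CV: "\<And>x. x \<in> C \<Longrightarrow> x \<in> V \<and> x \<noteq> a \<and> x \<noteq> b \<and> x \<noteq> c \<and> x \<noteq> d"
    using assms(3) R(1) by auto
  have CE: "\<And>x r. x \<in> C \<Longrightarrow> r \<in> R \<Longrightarrow> E r x \<and> E x r" proof -
    fix x r assume "x \<in> C" "r \<in> R"
    then have "E r x" using assms(8) by blast
    then show "E r x \<and> E x r" using symE[of r x] by simp
  qed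
  have CC: "\<And>x y. x \<in> C \<Longrightarrow> y \<in> C \<Longrightarrow> x \<noteq> y \<Longrightarrow> E x y" using assms(4) by (auto simp: clique_def)
  have Codd: "\<And>x. x \<in> C \<Longrightarrow> odd (degree V E x)" using assms(7) by blast
  obtain x0 x1 where x: "x0 \<in> C" "x1 \<in> C" "x0 \<noteq> x1"
  proof -
    have "\<not> card C \<le> Suc 0" using assms(5,6) by simp
    then obtain x0 x1 where "x0 \<in> C" "x1 \<in> C" "x0 \<noteq> x1" using card_le_Suc0_iff_eq[OF finC] by blast
    then show ?thesis using that by blast
  qed
  have RV: "a \<in> V" "b \<in> V" "c \<in> V" "d \<in> V" using R by auto
  have Rm: "a \<in> R" "b \<in> R" "c \<in> R" "d \<in> R" using R by auto
  have xn: "x0 \<noteq> a" "x0 \<noteq> b" "x0 \<noteq> c" "x0 \<noteq> d" "x1 \<noteq> a" "x1 \<noteq> b" "x1 \<noteq> c" "x1 \<noteq> d"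
    using CV[OF x(1)] CV[OF x(2)] by simp_all
  have dist6: "distinct [a,b,c,d,x0,x1]" using R(3) xn x(3) by auto
  have ex: "E a x0" "E b x0" "E c x0" "E d x0" "E a x1" "E b x1" "E c x1" "E d x1"
    using CE[OF x(1) Rm(1)] CE[OF x(1) Rm(2)] CE[OF x(1) Rm(3)] CE[OF x(1) Rm(4)]
      CE[OF x(2) Rm(1)] CE[OF x(2) Rm(2)] CE[OF x(2) Rm(3)] CE[OF x(2) Rm(4)] by simp_all
  have xV: "x0 \<in> V" "x1 \<in> V" using CV[OF x(1)] CV[OF x(2)] by simp_all
  have loc: "graph V E \<and> a \<in> V \<and> b \<in> V \<and> c \<in> V \<and> d \<in> V \<and> x0 \<in> V \<and> x1 \<in> V \<and>
     distinct [a,b,c,d,x0,x1] \<and> E a b \<and> E b c \<and> E c d \<and> \<not> E a c \<and> \<not> E a d \<and> \<not> E b d \<and>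
     E a x0 \<and> E b x0 \<and> E c x0 \<and> E d x0 \<and> E a x1 \<and> E b x1 \<and> E c x1 \<and> E d x1 \<and> E x0 x1 \<and>
     odd (degree V E x0) \<and> odd (degree V E x1)"
    using G RV xV dist6 ad ex CC[OF x] Codd[OF x(1)] Codd[OF x(2)] by (intro conjI) assumption+
  have CR: "C \<inter> R = {}" using assms(3) by auto
  have Kdeg: "\<And>S v. S \<subseteq> C \<union> R \<Longrightarrow> v \<in> C \<Longrightarrow> v \<notin> S \<Longrightarrow> even (card S) \<Longrightarrow> odd (degree (V - S) E v)"
  proof -
    fix S v assume S: "S \<subseteq> C \<union> R" "v \<in> C" "v \<notin> S" "even (card S)"
    have SV: "S \<subseteq> V" using S(1) R(2) assms(3) by auto
    have fS: "finite S" using SV finV finite_subset by blast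
    have "\<forall>u\<in>S. E v u"
    proof
      fix u assume u: "u \<in> S"
      show "E v u"
      proof (cases "u \<in> C")
        case True then show ?thesis using CC[OF S(2) True] u S(3) by blast
      next
        case False then have "u \<in> R" using u S(1) by blast
        then show ?thesis using CE[OF S(2)] by blast
      qed
    qed
    then have "(\<Sum>u\<in>S. if E v u then 1 else 0) = card S" by (rule allcnt[of S E v, OF fS])
    then show "odd (degree (V - S) E v)" using par[OF G SV, of v] Codd[OF S(2)] S(4) by simp
  qed
  have cliqueC: "\<And>K. K \<subseteq> C \<Longrightarrow> clique E K" using assms(4) by (auto simp: clique_def)
  show ?thesis
  proof (cases "even (degree V E a + degree V E b + degree V E c + degree V E d)")
    case True
    let ?S = "{a,b,c,d,x0,x1}"
    have adm: "admissible V E ?S"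
      apply (rule Even[of V E a b c d x0 x1]) using loc True by auto
    have K: "(C \<union> R) - ?S = C - {x0,x1}" using R(1) CR by auto
    have cS: "card ?S = 6" using loc by simp
    have cK: "card (C - {x0,x1}) = m - 2" using x assms(5) finC by (simp add: card_Diff_subset)
    show ?thesis
    proof (intro exI[of _ ?S] conjI)
      show "?S \<subseteq> C \<union> R" using R(1) x by auto
      show "admissible V E ?S" by (rule adm)
      show "clique E ((C \<union> R) - ?S)" unfolding K by (rule cliqueC) auto
      show "card ((C \<union> R) - ?S) \<le> m - 1" unfolding K cK by simp
      show "\<forall>v\<in>(C \<union> R) - ?S. odd (degree (V - ?S) E v)" unfolding K
        proof
        fix v assume v: "v \<in> C - {x0,x1}"
        then have "v \<notin> ?S" using CV[of v] by auto
        moreover have "?S \<subseteq> C \<union> R" using R(1) x by auto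
        ultimately show "odd (degree (V - ?S) E v)" using Kdeg[of ?S v] cS v by auto
      qed
    qed
  next
    case False
    then obtain r1 r2 r3 r4 where r: "{r1,r2,r3,r4} = {a,b,c,d}" "distinct [r1,r2,r3,r4]"
      and adm1: "admissible V E {r1,x0,r2,x1,r3}" and o4: "odd (degree (V - {r1,x0,r2,x1,r3}) E r4)"
      using Odd[of V E a b c d x0 x1] loc by auto
    let ?S1 = "{r1,x0,r2,x1,r3}"
    have rR: "r1 \<in> R" "r2 \<in> R" "r3 \<in> R" "r4 \<in> R" using r(1) R(1) by blast+
    have rx: "r1 \<noteq> x0" "r2 \<noteq> x0" "r3 \<noteq> x0" "r4 \<noteq> x0" "r1 \<noteq> x1" "r2 \<noteq> x1" "r3 \<noteq> x1" "r4 \<noteq> x1"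
      using rR x CR by auto
    have S1V: "?S1 \<subseteq> V" using rR x R(2) assms(3) by auto
    have RS: "R = {r1,r2,r3,r4}" using r(1) R(1) by simp
    show ?thesis
    proof (cases "m = 2")
      case True
      have Cx: "C = {x0,x1}"
      proof -
        have "{x0,x1} \<subseteq> C" using x by auto
        moreover have "card {x0,x1} = card C" using x True assms(5) by simp
        ultimately show ?thesis using finC card_subset_eq by blast
      qed
      have K: "(C \<union> R) - ?S1 = {r4}" unfolding Cx RS using r(2) rx by auto
      show ?thesis
      proof (intro exI[of _ ?S1] conjI)
        show "?S1 \<subseteq> C \<union> R" using rR x by auto
        show "admissible V E ?S1" by (rule adm1)
        show "clique E ((C \<union> R) - ?S1)" unfolding K by (simp add: clique_def)
        show "card ((C \<union> R) - ?S1) \<le> m - 1" unfolding K True by simp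
        show "\<forall>v\<in>(C \<union> R) - ?S1. odd (degree (V - ?S1) E v)" unfolding K using o4 by simp
      qed
    next
      case m3: False
      have "{x0,x1} \<subset> C"
      proof (rule psubsetI)
        show "{x0,x1} \<subseteq> C" using x by auto
        have "card {x0,x1} = 2" using x by simp
        then show "{x0,x1} \<noteq> C" using assms(5) m3 by auto
      qed
      then obtain x2 where x2: "x2 \<in> C" "x2 \<noteq> x0" "x2 \<noteq> x1" by blast
      have rx2: "r1 \<noteq> x2" "r2 \<noteq> x2" "r3 \<noteq> x2" "r4 \<noteq> x2" using rR x2 CR by auto
      have fS1: "finite ?S1" by simp
      have cS1: "card ?S1 = 5" using r(2) rx x(3) by simp
      have x2S1: "x2 \<notin> ?S1" using rx2 x2 by auto
      have adjx2: "\<forall>u\<in>?S1. E x2 u" using CE[OF x2(1)] rR CC[OF x2(1) x(1)] CC[OF x2(1) x(2)] x2 by auto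
      have adm2: "admissible V E (?S1 \<union> {x2})"
      proof (rule step[OF adm1], rule sa_intro[OF G S1V])
        show "{x2} \<subseteq> V - ?S1" using x2S1 CV[OF x2(1)] by auto
        show "independent E {x2}" using irrE by (simp add: independent_def)
        show "even (\<Sum>x\<in>{x2}. degree V E x + (\<Sum>u\<in>?S1. if E x u then 1 else 0))"
          using allcnt[of ?S1 E x2, OF fS1 adjx2] cS1 Codd[OF x2(1)] by simp
      qed
      let ?S2 = "?S1 \<union> {x2} \<union> {r4}"
      have S12V: "?S1 \<union> {x2} \<subseteq> V" using S1V CV[OF x2(1)] by auto
      have r4S: "r4 \<notin> ?S1 \<union> {x2}" using r(2) rx rx2 by auto
      have adm3: "admissible V E ?S2"
      proof (rule step[OF adm2], rule sa_intro[OF G S12V])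
        show "{r4} \<subseteq> V - (?S1 \<union> {x2})" using r4S rR R(2) by auto
        show "independent E {r4}" using irrE by (simp add: independent_def)
        have e: "?S1 \<union> {x2} = insert x2 ?S1" by auto
        have "E r4 x2" using CE[OF x2(1) rR(4)] by simp
        then have "(\<Sum>u\<in>?S1 \<union> {x2}. if E r4 u then 1 else 0) = 1 + (\<Sum>u\<in>?S1. if E r4 u then 1 else (0::nat))"
          unfolding e using x2S1 by (simp add: sum.insert)
        moreover have "odd (degree V E r4 + (\<Sum>u\<in>?S1. if E r4 u then 1 else 0))"
          using o4 par[OF G S1V, of r4] by simp
        ultimately show "even (\<Sum>x\<in>{r4}. degree V E x + (\<Sum>u\<in>?S1 \<union> {x2}. if E x u then 1 else 0))"
          by simp
      qed
      have S2V: "?S2 \<subseteq> V" using S12V rR R(2) by auto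
      show ?thesis
      proof (cases "m = 3")
        case True
        have Cx: "C = {x0,x1,x2}"
        proof -
          have "{x0,x1,x2} \<subseteq> C" using x x2 by auto
          moreover have "card {x0,x1,x2} = card C" using x x2 True assms(5) by simp
          ultimately show ?thesis using finC card_subset_eq by blast
        qed
        have K: "(C \<union> R) - ?S2 = {}" unfolding Cx RS by auto
        show ?thesis
        proof (intro exI[of _ ?S2] conjI)
          show "?S2 \<subseteq> C \<union> R" using rR x x2 by auto
          show "admissible V E ?S2" by (rule adm3)
          show "clique E ((C \<union> R) - ?S2)" unfolding K by (simp add: clique_def)
          show "card ((C \<union> R) - ?S2) \<le> m - 1" unfolding K by simp
          show "\<forall>v\<in>(C \<union> R) - ?S2. odd (degree (V - ?S2) E v)" unfolding K by simp
        qed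
      next
        case m4: False
        have "{x0,x1,x2} \<subset> C"
        proof (rule psubsetI)
          show "{x0,x1,x2} \<subseteq> C" using x x2 by auto
          have "card {x0,x1,x2} = 3" using x x2 by simp
          then show "{x0,x1,x2} \<noteq> C" using assms(5) m4 by auto
        qed
        then obtain x3 where x3: "x3 \<in> C" "x3 \<noteq> x0" "x3 \<noteq> x1" "x3 \<noteq> x2" by blast
        have rx3: "r1 \<noteq> x3" "r2 \<noteq> x3" "r3 \<noteq> x3" "r4 \<noteq> x3" using rR x3 CR by auto
        have fS2: "finite ?S2" by simp
        have rneq: "r1 \<noteq> r2" "r1 \<noteq> r3" "r1 \<noteq> r4" "r2 \<noteq> r3" "r2 \<noteq> r4" "r3 \<noteq> r4" using r(2) by auto
        have cS2: "card ?S2 = 7" by (simp add: rneq rneq[symmetric] rx rx2 x(3) x2(2,3) rx[symmetric] rx2[symmetric] x2(2,3)[symmetric] x(3)[symmetric])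
        have x3S2: "x3 \<notin> ?S2" using rx3 x3 by auto
        have adjx3: "\<forall>u\<in>?S2. E x3 u"
          using CE[OF x3(1)] rR CC[OF x3(1) x(1)] CC[OF x3(1) x(2)] CC[OF x3(1) x2(1)] x3 by auto
        let ?S3 = "?S2 \<union> {x3}"
        have adm4: "admissible V E ?S3"
        proof (rule step[OF adm3], rule sa_intro[OF G S2V])
          show "{x3} \<subseteq> V - ?S2" using x3S2 CV[OF x3(1)] by auto
          show "independent E {x3}" using irrE by (simp add: independent_def)
          show "even (\<Sum>x\<in>{x3}. degree V E x + (\<Sum>u\<in>?S2. if E x u then 1 else 0))"
            using allcnt[of ?S2 E x3, OF fS2 adjx3] cS2 Codd[OF x3(1)] by simp
        qed
        have K: "(C \<union> R) - ?S3 = C - {x0,x1,x2,x3}" using RS CR by auto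
        have cS3: "card ?S3 = 8" using cS2 x3S2 by simp
        have cK: "card (C - {x0,x1,x2,x3}) = m - 4" using x x2 x3 assms(5) finC by (simp add: card_Diff_subset)
        show ?thesis
        proof (intro exI[of _ ?S3] conjI)
          show "?S3 \<subseteq> C \<union> R" using rR x x2 x3 by auto
          show "admissible V E ?S3" by (rule adm4)
          show "clique E ((C \<union> R) - ?S3)" unfolding K by (rule cliqueC) auto
          show "card ((C \<union> R) - ?S3) \<le> m - 1" unfolding K cK by simp
          show "\<forall>v\<in>(C \<union> R) - ?S3. odd (degree (V - ?S3) E v)"
          proof
            fix v assume v: "v \<in> (C \<union> R) - ?S3"
            have "?S3 \<subseteq> C \<union> R" using rR x x2 x3 by auto
            then show "odd (degree (V - ?S3) E v)" using Kdeg[of ?S3 v] v cS3 K by auto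
          qed
        qed
      qed
    qed
  qed
qed

end
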